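(* Let $\hbar>0$ and, on the Schwartz space $\mathcal{S}(\mathbb{R}^3)$, let $\widehat{x}_j$ be multiplication by $x_j$ and $\widehat{p}_j=-i\hbar\,\partial_{x_j}$ for $j=1,2,3$ (so $[\widehat{x}_j,\widehat{p}_k]=i\hbar\,\delta_{jk}$ and all other pairs commute). Consider the classical angular momentum $l=(l_1,l_2,l_3)=(x_2p_3-x_3p_2,\;x_3p_1-x_1p_3,\;x_1p_2-x_2p_1)$ and the polynomial $l^2=l_1^2+l_2^2+l_3^2$ in $(x,p)\in\mathbb{R}^3\times\mathbb{R}^3$. Let $\widehat{l}=(\widehat{x}_2\widehat{p}_3-\widehat{x}_3\widehat{p}_2,\;\widehat{x}_3\widehat{p}_1-\widehat{x}_1\widehat{p}_3,\;\widehat{x}_1\widehat{p}_2-\widehat{x}_2\widehat{p}_1)$ and $\widehat{l}^{\,2}=\widehat{l}_1^{\,2}+\widehat{l}_2^{\,2}+\widehat{l}_3^{\,2}$. Then the Born--Jordan quantization of $l^2$ satisfies $$\mathrm{Op}_{\mathrm{BJ}}(l^2)=\widehat{l}^{\,2}+2\hbar^2 .$$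
   Context: Shubin $\tau$-ordering: for a real parameter $\tau$ and non-negative integers $m,n$, in one variable $\mathrm{Op}_\tau(x^m p^n)=\sum_{k=0}^{n}\binom{n}{k}\tau^{n-k}(1-\tau)^k\,\widehat{p}^{\,k}\widehat{x}^{\,m}\widehat{p}^{\,n-k}$. For a monomial in several variables $x^\alpha p^\beta=\prod_{j} x_j^{\alpha_j}p_j^{\beta_j}$, $\mathrm{Op}_\tau(x^\alpha p^\beta)=\prod_j \mathrm{Op}_\tau(x_j^{\alpha_j}p_j^{\beta_j})$ (the factors for different indices $j$ commute), extended linearly to polynomials. The Born--Jordan quantization is $\mathrm{Op}_{\mathrm{BJ}}(a)=\int_0^1 \mathrm{Op}_\tau(a)\,d\tau$ for polynomials $a(x,p)$; in one variable this gives $\mathrm{Op}_{\mathrm{BJ}}(x^m p^n)=\frac{1}{m+1}\sum_{k=0}^m \widehat{x}^{\,m-k}\widehat{p}^{\,n}\widehat{x}^{\,k}$. Here $l^2$ is regarded as the expanded polynomial, e.g. $l_3^2=x_1^2p_2^2+x_2^2p_1^2-2x_1p_1x_2p_2$. *)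

theory Defs
  imports "HOL-Analysis.Analysis" "HOL-Library.Poly_Mapping"
begin

datatype var = X "3" | P "3"

type_synonym monomial = "var \<Rightarrow>\<^sub>0 nat"
type_synonym phase_poly = "monomial \<Rightarrow>\<^sub>0 real"

definition xv :: "3 \<Rightarrow> phase_poly" where
  "xv j = Poly_Mapping.single (Poly_Mapping.single (X j) 1) 1"

definition pv :: "3 \<Rightarrow> phase_poly" where
  "pv j = Poly_Mapping.single (Poly_Mapping.single (P j) 1) 1"

definition l_cl :: "3 \<Rightarrow> phase_poly" where
  "l_cl k = (if k = 1 then xv 2 * pv 3 - xv 3 * pv 2
             else if k = 2 then xv 3 * pv 1 - xv 1 * pv 3
             else xv 1 * pv 2 - xv 2 * pv 1)"

definition l_sq :: phase_poly where
  "l_sq = l_cl 1 ^ 2 + l_cl 2 ^ 2 + l_cl 3 ^ 2"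

type_synonym fn = "real^3 \<Rightarrow> complex"

definition dpart :: "3 \<Rightarrow> fn \<Rightarrow> fn" where
  "dpart j f = (\<lambda>x. vector_derivative (\<lambda>t::real. f (x + t *\<^sub>R axis j 1)) (at 0))"

definition xhat :: "3 \<Rightarrow> fn \<Rightarrow> fn" where
  "xhat j f = (\<lambda>x. complex_of_real (x $ j) * f x)"

definition phat :: "real \<Rightarrow> 3 \<Rightarrow> fn \<Rightarrow> fn" where
  "phat hbar j f = (\<lambda>x. - (\<i> * complex_of_real hbar) * dpart j f x)"

definition dparts :: "3 list \<Rightarrow> fn \<Rightarrow> fn" where
  "dparts js f = foldr dpart js f"

definition schwartz :: "fn set" where
  "schwartz = {f. (\<forall>js j x. (\<lambda>t::real. dparts js f (x + t *\<^sub>R axis j 1)) differentiable (at 0))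
               \<and> (\<forall>js (\<alpha>::3 \<Rightarrow> nat). bounded (range (\<lambda>x. complex_of_real (\<Prod>i\<in>UNIV. (x $ i) ^ \<alpha> i) * dparts js f x)))}"

definition op_tau_1 :: "real \<Rightarrow> real \<Rightarrow> 3 \<Rightarrow> nat \<Rightarrow> nat \<Rightarrow> fn \<Rightarrow> fn" where
  "op_tau_1 hbar \<tau> j m n f = (\<lambda>x. \<Sum>k\<le>n. complex_of_real (real (n choose k) * \<tau> ^ (n - k) * (1 - \<tau>) ^ k) *
      ((phat hbar j ^^ k) ((xhat j ^^ m) ((phat hbar j ^^ (n - k)) f))) x)"

definition op_tau_mon :: "real \<Rightarrow> real \<Rightarrow> monomial \<Rightarrow> fn \<Rightarrow> fn" where
  "op_tau_mon hbar \<tau> \<mu> f =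
     op_tau_1 hbar \<tau> 1 (Poly_Mapping.lookup \<mu> (X 1)) (Poly_Mapping.lookup \<mu> (P 1))
      (op_tau_1 hbar \<tau> 2 (Poly_Mapping.lookup \<mu> (X 2)) (Poly_Mapping.lookup \<mu> (P 2))
        (op_tau_1 hbar \<tau> 3 (Poly_Mapping.lookup \<mu> (X 3)) (Poly_Mapping.lookup \<mu> (P 3)) f))"

definition op_tau :: "real \<Rightarrow> real \<Rightarrow> phase_poly \<Rightarrow> fn \<Rightarrow> fn" where
  "op_tau hbar \<tau> a f = (\<lambda>x. \<Sum>\<mu>\<in>Poly_Mapping.keys a. complex_of_real (Poly_Mapping.lookup a \<mu>) * op_tau_mon hbar \<tau> \<mu> f x)"

definition op_BJ :: "real \<Rightarrow> phase_poly \<Rightarrow> fn \<Rightarrow> fn" where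
  "op_BJ hbar a f = (\<lambda>x. integral {0..1} (\<lambda>\<tau>. op_tau hbar \<tau> a f x))"

definition lhat :: "real \<Rightarrow> 3 \<Rightarrow> fn \<Rightarrow> fn" where
  "lhat hbar k f = (if k = 1 then (\<lambda>x. xhat 2 (phat hbar 3 f) x - xhat 3 (phat hbar 2 f) x)
                    else if k = 2 then (\<lambda>x. xhat 3 (phat hbar 1 f) x - xhat 1 (phat hbar 3 f) x)
                    else (\<lambda>x. xhat 1 (phat hbar 2 f) x - xhat 2 (phat hbar 1 f) x))"

definition lhat_sq :: "real \<Rightarrow> fn \<Rightarrow> fn" where
  "lhat_sq hbar f = (\<lambda>x. lhat hbar 1 (lhat hbar 1 f) x + lhat hbar 2 (lhat hbar 2 f) x
                         + lhat hbar 3 (lhat hbar 3 f) x)"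

end

theory Submission
  imports Defs
begin

lemma mvt_bound:
  fixes g g' :: "real \<Rightarrow> complex"
  assumes "0 \<le> h" and d: "\<And>t. t \<in> {0..h} \<Longrightarrow> (g has_vector_derivative g' t) (at t)"
    and b: "\<And>t. t \<in> {0..h} \<Longrightarrow> norm (g' t) \<le> B"
  shows "norm (g h - g 0) \<le> B * h"
proof -
  have "norm (g h - g 0) \<le> B * norm (h - 0)"
  proof (rule differentiable_bound[where S="{0..h}" and f'="\<lambda>t d. d *\<^sub>R g' t"])
    show "convex {0..h}" by simp
    show "(g has_derivative (\<lambda>d. d *\<^sub>R g' t)) (at t within {0..h})" if "t \<in> {0..h}" for t
      using d[OF that] has_vector_derivative_at_within unfolding has_vector_derivative_def by blast
    show "onorm (\<lambda>d. d *\<^sub>R g' t) \<le> B" if "t \<in> {0..h}" for t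
      using b[OF that] onorm_scaleR_left[OF bounded_linear_ident, of "g' t"] onorm_id[where 'a=real] by simp
  qed (use assms in auto)
  then show ?thesis using assms by simp
qed

lemma taylor1:
  fixes g g' g'' :: "real \<Rightarrow> complex"
  assumes "0 \<le> h" and d1: "\<And>t. t \<in> {0..h} \<Longrightarrow> (g has_vector_derivative g' t) (at t)"
    and d2: "\<And>t. t \<in> {0..h} \<Longrightarrow> (g' has_vector_derivative g'' t) (at t)"
    and b: "\<And>t. t \<in> {0..h} \<Longrightarrow> norm (g'' t) \<le> M"
  shows "norm (g h - g 0 - h *\<^sub>R g' 0) \<le> M * h * h"
proof -
  have M: "0 \<le> M" if "0 < h" using b[of 0] that by (auto intro: order_trans[OF norm_ge_zero])
  have g'b: "norm (g' t - g' 0) \<le> M * h" if t: "t \<in> {0..h}" for t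
  proof -
    have "norm (g' t - g' 0) \<le> M * t"
      by (rule mvt_bound[where g'=g'']) (use t d2 b in auto)
    also have "\<dots> \<le> M * h" using t M by (cases "h = 0") (auto intro: mult_left_mono)
    finally show ?thesis .
  qed
  have "norm ((\<lambda>t. g t - t *\<^sub>R g' 0) h - (\<lambda>t. g t - t *\<^sub>R g' 0) 0) \<le> (M * h) * h"
  proof (rule mvt_bound[where g'="\<lambda>t. g' t - g' 0"])
    show "((\<lambda>t. g t - t *\<^sub>R g' 0) has_vector_derivative g' t - g' 0) (at t)" if "t \<in> {0..h}" for t
      using d1[OF that] by (auto intro!: derivative_eq_intros)
  qed (use assms g'b in auto)
  then show ?thesis by (simp add: algebra_simps)
qed

abbreviation e :: "3 \<Rightarrow> real^3" where "e j \<equiv> axis j 1"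

definition line_diff :: "3 \<Rightarrow> fn \<Rightarrow> bool" where
  "line_diff j g \<longleftrightarrow> (\<forall>y. (\<lambda>t::real. g (y + t *\<^sub>R e j)) differentiable (at 0))"

lemma line_deriv:
  assumes "line_diff j g"
  shows "((\<lambda>s. g (y + s *\<^sub>R e j)) has_vector_derivative dpart j g (y + t *\<^sub>R e j)) (at t)"
proof -
  let ?z = "y + t *\<^sub>R e j"
  have d: "((\<lambda>u. g (?z + u *\<^sub>R e j)) has_vector_derivative dpart j g ?z) (at 0)"
    using assms vector_derivative_works unfolding dpart_def line_diff_def by blast
  have s: "((\<lambda>s. s - t) has_vector_derivative 1) (at t)" by (auto intro!: derivative_eq_intros)
  have "(((\<lambda>u. g (?z + u *\<^sub>R e j)) \<circ> (\<lambda>s. s - t)) has_vector_derivative 1 *\<^sub>R dpart j g ?z) (at t)"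
    by (rule vector_diff_chain_at[OF s]) (use d in simp)
  moreover have "((\<lambda>u. g (?z + u *\<^sub>R e j)) \<circ> (\<lambda>s. s - t)) = (\<lambda>s. g (y + s *\<^sub>R e j))"
    by (rule ext) (simp add: algebra_simps)
  ultimately show ?thesis by simp
qed

lemma schwartz_line_diff: "f \<in> schwartz \<Longrightarrow> line_diff j (dparts js f)"
  unfolding schwartz_def line_diff_def by blast

lemma schwartz_bounded: "f \<in> schwartz \<Longrightarrow> \<exists>M. \<forall>y. norm (dparts js f y) \<le> M"
proof -
  assume "f \<in> schwartz"
  then have "bounded (range (\<lambda>x. complex_of_real (\<Prod>i\<in>UNIV. (x $ i) ^ (\<lambda>_. 0::nat) i) * dparts js f x))"
    unfolding schwartz_def by (elim CollectE conjE allE[where x=js] allE[where x="\<lambda>_. 0::nat"]) 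
  then show ?thesis by (auto simp: bounded_iff)
qed

lemma dparts_Cons: "dparts (j # js) f = dpart j (dparts js f)"
  by (simp add: dparts_def)

lemma sch_ld0: "f \<in> schwartz \<Longrightarrow> line_diff j f"
  using schwartz_line_diff[of f j "[]"] by (simp add: dparts_def)
lemma sch_ld1: "f \<in> schwartz \<Longrightarrow> line_diff j (dpart k f)"
  using schwartz_line_diff[of f j "[k]"] by (simp add: dparts_def)
lemma sch_ld2: "f \<in> schwartz \<Longrightarrow> line_diff j (dpart k (dpart l f))"
  using schwartz_line_diff[of f j "[k,l]"] by (simp add: dparts_def)

lemma delta_est:
  assumes f: "f \<in> schwartz"
  shows "\<exists>C. \<forall>h>0. norm (f (x + h *\<^sub>R e a + h *\<^sub>R e b) - f (x + h *\<^sub>R e a) - f (x + h *\<^sub>R e b) + f x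
            - complex_of_real (h^2) * dpart b (dpart a f) x) \<le> C * h^3"
proof -
  obtain M1 where M1: "\<And>y. norm (dparts [b,a,a] f y) \<le> M1" using schwartz_bounded[OF f] by blast
  obtain M2 where M2: "\<And>y. norm (dparts [b,b,a] f y) \<le> M2" using schwartz_bounded[OF f] by blast
  have "norm (f (x + h *\<^sub>R e a + h *\<^sub>R e b) - f (x + h *\<^sub>R e a) - f (x + h *\<^sub>R e b) + f x
            - complex_of_real (h^2) * dpart b (dpart a f) x) \<le> (M1 + M2) * h^3" if h: "h > 0" for h
  proof -
    define G where "G s = f (x + h *\<^sub>R e b + s *\<^sub>R e a) - f (x + s *\<^sub>R e a)" for s
    define G' where "G' s = dpart a f (x + h *\<^sub>R e b + s *\<^sub>R e a) - dpart a f (x + s *\<^sub>R e a)" for s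
    define G'' where "G'' s = dpart a (dpart a f) (x + h *\<^sub>R e b + s *\<^sub>R e a) - dpart a (dpart a f) (x + s *\<^sub>R e a)" for s
    have dG: "(G has_vector_derivative G' t) (at t)" for t
      unfolding G_def G'_def
      by (intro has_vector_derivative_diff line_deriv sch_ld0 f)
    have dG': "(G' has_vector_derivative G'' t) (at t)" for t
      unfolding G'_def G''_def
      by (intro has_vector_derivative_diff line_deriv sch_ld1 f)
    have bG'': "norm (G'' t) \<le> M1 * h" for t
    proof -
      have "norm ((\<lambda>r. dpart a (dpart a f) (x + t *\<^sub>R e a + r *\<^sub>R e b)) h
               - (\<lambda>r. dpart a (dpart a f) (x + t *\<^sub>R e a + r *\<^sub>R e b)) 0) \<le> M1 * h"
      proof (rule mvt_bound[where g'="\<lambda>r. dpart b (dpart a (dpart a f)) (x + t *\<^sub>R e a + r *\<^sub>R e b)"])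
        show "((\<lambda>r. dpart a (dpart a f) (x + t *\<^sub>R e a + r *\<^sub>R e b)) has_vector_derivative
           dpart b (dpart a (dpart a f)) (x + t *\<^sub>R e a + r *\<^sub>R e b)) (at r)" for r
          by (rule line_deriv[OF sch_ld2[OF f]])
        show "norm (dpart b (dpart a (dpart a f)) (x + t *\<^sub>R e a + r *\<^sub>R e b)) \<le> M1" for r
          using M1 by (simp add: dparts_def)
      qed (use h in simp)
      then show ?thesis unfolding G''_def by (simp add: add_ac)
    qed
    have T1: "norm (G h - G 0 - h *\<^sub>R G' 0) \<le> (M1 * h) * h * h"
      by (rule taylor1[where g''=G'' and g'=G' and g=G]) (use h dG dG' bG'' in auto)
    define L where "L t = dpart a f (x + t *\<^sub>R e b)" for t
    have T2: "norm (L h - L 0 - h *\<^sub>R dpart b (dpart a f) x) \<le> M2 * h * h"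
    proof -
      have "norm (L h - L 0 - h *\<^sub>R (\<lambda>t. dpart b (dpart a f) (x + t *\<^sub>R e b)) 0) \<le> M2 * h * h"
      proof (rule taylor1[where g''="\<lambda>t. dpart b (dpart b (dpart a f)) (x + t *\<^sub>R e b)"
            and g'="\<lambda>t. dpart b (dpart a f) (x + t *\<^sub>R e b)" and g=L])
        show "(L has_vector_derivative dpart b (dpart a f) (x + t *\<^sub>R e b)) (at t)" for t
          unfolding L_def by (rule line_deriv[OF sch_ld1[OF f]])
        show "((\<lambda>t. dpart b (dpart a f) (x + t *\<^sub>R e b)) has_vector_derivative dpart b (dpart b (dpart a f)) (x + t *\<^sub>R e b)) (at t)" for t
          by (rule line_deriv[OF sch_ld2[OF f]])
        show "norm (dpart b (dpart b (dpart a f)) (x + t *\<^sub>R e b)) \<le> M2" for t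
          using M2 by (simp add: dparts_def)
      qed (use h in simp)
      then show ?thesis by simp
    qed
    have eq1: "G h - G 0 = f (x + h *\<^sub>R e a + h *\<^sub>R e b) - f (x + h *\<^sub>R e a) - f (x + h *\<^sub>R e b) + f x"
      unfolding G_def by (simp add: add_ac)
    have eq2: "G' 0 = L h - L 0" unfolding G'_def L_def by simp
    have hh: "complex_of_real (h^2) * dpart b (dpart a f) x = h *\<^sub>R (h *\<^sub>R dpart b (dpart a f) x)"
      by (simp add: scaleR_conv_of_real power2_eq_square)
    have "f (x + h *\<^sub>R e a + h *\<^sub>R e b) - f (x + h *\<^sub>R e a) - f (x + h *\<^sub>R e b) + f x
            - complex_of_real (h^2) * dpart b (dpart a f) x
          = (G h - G 0 - h *\<^sub>R G' 0) + h *\<^sub>R (L h - L 0 - h *\<^sub>R dpart b (dpart a f) x)"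
      unfolding eq1[symmetric] eq2 hh by (simp add: scaleR_diff_right)
    also have "norm \<dots> \<le> (M1 * h) * h * h + h * (M2 * h * h)"
    proof (rule order_trans[OF norm_triangle_ineq add_mono])
      show "norm (h *\<^sub>R (L h - L 0 - h *\<^sub>R dpart b (dpart a f) x)) \<le> h * (M2 * h * h)"
        using T2 h by (simp add: mult_left_mono)
    qed (rule T1)
    also have "\<dots> = (M1 + M2) * h^3" by (simp add: algebra_simps power3_eq_cube)
    finally show ?thesis .
  qed
  then show ?thesis by blast
qed

lemma le_zero_by_eps:
  fixes c K :: real
  assumes "\<And>h. h > 0 \<Longrightarrow> c \<le> K * h"
  shows "c \<le> 0"
proof (rule field_le_epsilon)
  fix d :: real assume d: "0 < d"
  have "c \<le> K * (d / (\<bar>K\<bar> + 1))" using assms[of "d / (\<bar>K\<bar> + 1)"] d by simp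
  also have "\<dots> \<le> \<bar>K\<bar> * (d / (\<bar>K\<bar> + 1))" using d by (intro mult_right_mono) auto
  also have "\<dots> \<le> d" using d by (simp add: field_simps)
  finally show "c \<le> 0 + d" by simp
qed

lemma clairaut:
  assumes f: "f \<in> schwartz"
  shows "dpart b (dpart a f) = dpart a (dpart b f)"
proof
  fix x
  obtain C1 where C1: "\<And>h. h > 0 \<Longrightarrow> norm (f (x + h *\<^sub>R e a + h *\<^sub>R e b) - f (x + h *\<^sub>R e a) - f (x + h *\<^sub>R e b) + f x
            - complex_of_real (h^2) * dpart b (dpart a f) x) \<le> C1 * h^3"
    using delta_est[OF f, of x a b] by blast
  obtain C2 where C2: "\<And>h. h > 0 \<Longrightarrow> norm (f (x + h *\<^sub>R e b + h *\<^sub>R e a) - f (x + h *\<^sub>R e b) - f (x + h *\<^sub>R e a) + f x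
            - complex_of_real (h^2) * dpart a (dpart b f) x) \<le> C2 * h^3"
    using delta_est[OF f, of x b a] by blast
  let ?d = "norm (dpart b (dpart a f) x - dpart a (dpart b f) x)"
  have "?d \<le> (C1 + C2) * h" if h: "h > 0" for h
  proof -
    let ?D = "f (x + h *\<^sub>R e a + h *\<^sub>R e b) - f (x + h *\<^sub>R e a) - f (x + h *\<^sub>R e b) + f x"
    have sw: "f (x + h *\<^sub>R e b + h *\<^sub>R e a) - f (x + h *\<^sub>R e b) - f (x + h *\<^sub>R e a) + f x = ?D"
      by (simp add: add_ac)
    have "complex_of_real (h^2) * (dpart b (dpart a f) x - dpart a (dpart b f) x)
        = (?D - complex_of_real (h^2) * dpart a (dpart b f) x) - (?D - complex_of_real (h^2) * dpart b (dpart a f) x)"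
      by (simp add: algebra_simps)
    then have "norm (complex_of_real (h^2) * (dpart b (dpart a f) x - dpart a (dpart b f) x))
       \<le> norm (?D - complex_of_real (h^2) * dpart a (dpart b f) x) + norm (?D - complex_of_real (h^2) * dpart b (dpart a f) x)"
      by (simp only: norm_triangle_ineq4)
    then have "h^2 * ?d \<le> norm (?D - complex_of_real (h^2) * dpart a (dpart b f) x) + norm (?D - complex_of_real (h^2) * dpart b (dpart a f) x)"
      by (simp add: norm_mult norm_power)
    also have "\<dots> \<le> C2 * h^3 + C1 * h^3" using C1[OF h] C2[OF h] sw by (intro add_mono) auto
    finally have "h^2 * ?d \<le> h^2 * ((C1 + C2) * h)" by (simp add: algebra_simps power3_eq_cube power2_eq_square)
    then show ?thesis using h by simp
  qed
  then have "?d \<le> 0" by (rule le_zero_by_eps)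
  then show "dpart b (dpart a f) x = dpart a (dpart b f) x" by simp
qed

definition mx :: "3 \<Rightarrow> monomial" where "mx j = Poly_Mapping.single (X j) 1"
definition mp :: "3 \<Rightarrow> monomial" where "mp j = Poly_Mapping.single (P j) 1"

lemma op1_00: "op_tau_1 h t j 0 0 g = g"
  by (simp add: op_tau_1_def)
lemma op1_20: "op_tau_1 h t j 2 0 g = xhat j (xhat j g)"
  by (simp add: op_tau_1_def numeral_2_eq_2)
lemma op1_02: "op_tau_1 h t j 0 2 g = phat h j (phat h j g)"
proof -
  have "op_tau_1 h t j 0 2 g = (\<lambda>x. complex_of_real (t^2 + 2 * t * (1 - t) + (1-t)^2) * phat h j (phat h j g) x)"
    by (simp add: op_tau_1_def numeral_2_eq_2 algebra_simps)
  also have "t^2 + 2 * t * (1 - t) + (1-t)^2 = 1" by (simp add: power2_eq_square algebra_simps)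
  finally show ?thesis by simp
qed
lemma op1_11: "op_tau_1 h t j 1 1 g = (\<lambda>x. complex_of_real t * xhat j (phat h j g) x + complex_of_real (1 - t) * phat h j (xhat j g) x)"
  by (simp add: op_tau_1_def)

lemma op1_20S: "op_tau_1 h t j (Suc (Suc 0)) 0 g = xhat j (xhat j g)"
  using op1_20 by (simp add: numeral_2_eq_2)
lemma op1_02S: "op_tau_1 h t j 0 (Suc (Suc 0)) g = phat h j (phat h j g)"
  using op1_02 by (simp add: numeral_2_eq_2)


lemma ld_deriv0: "line_diff j g \<Longrightarrow> ((\<lambda>t. g (y + t *\<^sub>R e j)) has_vector_derivative dpart j g y) (at 0)"
  using line_deriv[of j g y 0] by simp

lemma dpart_eqI: "(\<And>y. ((\<lambda>t. G (y + t *\<^sub>R e j)) has_vector_derivative D y) (at 0)) \<Longrightarrow> dpart j G = D"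
  unfolding dpart_def by (rule ext) (rule vector_derivative_at)

lemma line_diffI: "(\<And>y. ((\<lambda>t. G (y + t *\<^sub>R e j)) has_vector_derivative D y) (at 0)) \<Longrightarrow> line_diff j G"
  unfolding line_diff_def by (auto intro: differentiableI_vector)

lemma hvd_const: "((\<lambda>t. (\<lambda>y. c::complex) (y + t *\<^sub>R e j)) has_vector_derivative (\<lambda>y. 0) y) (at 0)"
  by simp

lemma hvd_coord: "((\<lambda>t. (\<lambda>y. complex_of_real (y $ k)) (y + t *\<^sub>R e j)) has_vector_derivative
     (\<lambda>y. if k = j then 1 else 0) y) (at 0)"
proof -
  have "(\<lambda>t. (\<lambda>y. complex_of_real (y $ k)) (y + t *\<^sub>R e j)) = (\<lambda>t. complex_of_real (y $ k + t * (if k = j then 1 else 0)))"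
    by (auto simp: axis_def)
  moreover have "((\<lambda>t. complex_of_real (y $ k + t * (if k = j then 1 else 0))) has_vector_derivative
      complex_of_real (if k = j then 1 else 0)) (at 0)"
    by (auto intro!: derivative_eq_intros)
  ultimately show ?thesis by (simp split: if_splits)
qed

lemma hvd_add: "line_diff j g \<Longrightarrow> line_diff j h \<Longrightarrow>
  ((\<lambda>t. (\<lambda>y. g y + h y) (y + t *\<^sub>R e j)) has_vector_derivative (\<lambda>y. dpart j g y + dpart j h y) y) (at 0)"
  by (auto intro!: has_vector_derivative_add ld_deriv0)
lemma hvd_diff: "line_diff j g \<Longrightarrow> line_diff j h \<Longrightarrow>
  ((\<lambda>t. (\<lambda>y. g y - h y) (y + t *\<^sub>R e j)) has_vector_derivative (\<lambda>y. dpart j g y - dpart j h y) y) (at 0)"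
  by (auto intro!: has_vector_derivative_diff ld_deriv0)
lemma hvd_minus: "line_diff j g \<Longrightarrow>
  ((\<lambda>t. (\<lambda>y. - g y) (y + t *\<^sub>R e j)) has_vector_derivative (\<lambda>y. - dpart j g y) y) (at 0)"
  by (auto intro!: has_vector_derivative_minus ld_deriv0)
lemma hvd_mult: "line_diff j g \<Longrightarrow> line_diff j h \<Longrightarrow>
  ((\<lambda>t. (\<lambda>y. g y * h y) (y + t *\<^sub>R e j)) has_vector_derivative (\<lambda>y. dpart j g y * h y + g y * dpart j h y) y) (at 0)"
proof -
  assume g: "line_diff j g" and h: "line_diff j h"
  have "((\<lambda>t. g (y + t *\<^sub>R e j) * h (y + t *\<^sub>R e j)) has_vector_derivative
     g (y + 0 *\<^sub>R e j) * dpart j h y + dpart j g y * h (y + 0 *\<^sub>R e j)) (at 0)"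
    using has_vector_derivative_mult[OF ld_deriv0[OF g] ld_deriv0[OF h]] by simp
  then show ?thesis by (simp add: add.commute)
qed

lemma ld_const[simp]: "line_diff j (\<lambda>y. c)" by (rule line_diffI[OF hvd_const])
lemma ld_coord[simp]: "line_diff j (\<lambda>y. complex_of_real (y $ k))" by (rule line_diffI[OF hvd_coord])
lemma ld_add[simp]: "line_diff j g \<Longrightarrow> line_diff j h \<Longrightarrow> line_diff j (\<lambda>y. g y + h y)"
  by (rule line_diffI[OF hvd_add])
lemma ld_diff[simp]: "line_diff j g \<Longrightarrow> line_diff j h \<Longrightarrow> line_diff j (\<lambda>y. g y - h y)"
  by (rule line_diffI[OF hvd_diff])
lemma ld_minus[simp]: "line_diff j g \<Longrightarrow> line_diff j (\<lambda>y. - g y)"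
  by (rule line_diffI[OF hvd_minus])
lemma ld_mult[simp]: "line_diff j g \<Longrightarrow> line_diff j h \<Longrightarrow> line_diff j (\<lambda>y. g y * h y)"
  by (rule line_diffI[OF hvd_mult])

lemma dp_const[simp]: "dpart j (\<lambda>y. c) = (\<lambda>y. 0)" by (rule dpart_eqI[OF hvd_const])
lemma dp_coord[simp]: "dpart j (\<lambda>y. complex_of_real (y $ k)) = (\<lambda>y. if k = j then 1 else 0)"
  by (rule dpart_eqI[OF hvd_coord])
lemma dp_add[simp]: "line_diff j g \<Longrightarrow> line_diff j h \<Longrightarrow> dpart j (\<lambda>y. g y + h y) = (\<lambda>y. dpart j g y + dpart j h y)"
  by (rule dpart_eqI[OF hvd_add])
lemma dp_diff[simp]: "line_diff j g \<Longrightarrow> line_diff j h \<Longrightarrow> dpart j (\<lambda>y. g y - h y) = (\<lambda>y. dpart j g y - dpart j h y)"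
  by (rule dpart_eqI[OF hvd_diff])
lemma dp_minus[simp]: "line_diff j g \<Longrightarrow> dpart j (\<lambda>y. - g y) = (\<lambda>y. - dpart j g y)"
  by (rule dpart_eqI[OF hvd_minus])
lemma dp_mult[simp]: "line_diff j g \<Longrightarrow> line_diff j h \<Longrightarrow> dpart j (\<lambda>y. g y * h y) = (\<lambda>y. dpart j g y * h y + g y * dpart j h y)"
  by (rule dpart_eqI[OF hvd_mult])



lemma l_sq_expand: "l_sq =
   Poly_Mapping.single (mx 2 + mx 2 + mp 3 + mp 3) 1 + Poly_Mapping.single (mx 3 + mx 3 + mp 2 + mp 2) 1
 + Poly_Mapping.single (mx 3 + mx 3 + mp 1 + mp 1) 1 + Poly_Mapping.single (mx 1 + mx 1 + mp 3 + mp 3) 1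
 + Poly_Mapping.single (mx 1 + mx 1 + mp 2 + mp 2) 1 + Poly_Mapping.single (mx 2 + mx 2 + mp 1 + mp 1) 1
 + Poly_Mapping.single (mx 2 + mp 2 + mx 3 + mp 3) (-2)
 + Poly_Mapping.single (mx 3 + mp 3 + mx 1 + mp 1) (-2)
 + Poly_Mapping.single (mx 1 + mp 1 + mx 2 + mp 2) (-2)"
  unfolding l_sq_def l_cl_def xv_def pv_def mx_def[symmetric] mp_def[symmetric]
  apply (simp add: power2_eq_square algebra_simps mult_single single_add[symmetric] single_uminus[symmetric])
  apply (simp add: single_uminus)
  done

lemma op_tau_superset:
  assumes "finite S" "Poly_Mapping.keys a \<subseteq> S"
  shows "op_tau h t a f x = (\<Sum>\<mu>\<in>S. complex_of_real (Poly_Mapping.lookup a \<mu>) * op_tau_mon h t \<mu> f x)"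
  unfolding op_tau_def
  by (rule sum.mono_neutral_left) (use assms in \<open>auto simp: in_keys_iff\<close>)

lemma op_tau_add: "op_tau h t (a + b) f x = op_tau h t a f x + op_tau h t b f x"
proof -
  let ?S = "Poly_Mapping.keys a \<union> Poly_Mapping.keys b"
  have "op_tau h t (a + b) f x = (\<Sum>\<mu>\<in>?S. complex_of_real (Poly_Mapping.lookup (a+b) \<mu>) * op_tau_mon h t \<mu> f x)"
    by (rule op_tau_superset) (auto dest: keys_add[THEN subsetD])
  also have "\<dots> = (\<Sum>\<mu>\<in>?S. complex_of_real (Poly_Mapping.lookup a \<mu>) * op_tau_mon h t \<mu> f x)
     + (\<Sum>\<mu>\<in>?S. complex_of_real (Poly_Mapping.lookup b \<mu>) * op_tau_mon h t \<mu> f x)"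
    by (simp add: lookup_add distrib_right sum.distrib)
  also have "\<dots> = op_tau h t a f x + op_tau h t b f x"
    by (subst (1 2) op_tau_superset[where S = ?S]) auto
  finally show ?thesis .
qed

lemma op_tau_single: "op_tau h t (Poly_Mapping.single \<mu> c) f x = complex_of_real c * op_tau_mon h t \<mu> f x"
  by (simp add: op_tau_def)


lemma mon_sq:
  assumes f: "f \<in> schwartz" and ab: "a \<noteq> b"
  shows "xhat a (xhat a (phat h b (phat h b f))) x = - complex_of_real (h^2) * (complex_of_real (x$a))^2 * dpart b (dpart b f) x"
  using sch_ld0[OF f] sch_ld1[OF f] sch_ld2[OF f] ab
  by (simp add: xhat_def phat_def power2_eq_square algebra_simps)

lemma mon_cross:
  assumes f: "f \<in> schwartz" and ab: "a \<noteq> b"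
  shows "op_tau_1 h t a 1 1 (op_tau_1 h t b 1 1 f) x = - complex_of_real (h^2) *
    (complex_of_real (x$a) * complex_of_real (x$b) * dpart a (dpart b f) x
     + complex_of_real (1-t) * (complex_of_real (x$a) * dpart a f x + complex_of_real (x$b) * dpart b f x)
     + complex_of_real ((1-t)^2) * f x)"
  using sch_ld0[OF f] sch_ld1[OF f] sch_ld2[OF f] ab unfolding op1_11
  by (simp add: xhat_def phat_def power2_eq_square algebra_simps)

lemma mon_sq':
  assumes f: "f \<in> schwartz" and ab: "a \<noteq> b"
  shows "phat h b (phat h b (xhat a (xhat a f))) x = - complex_of_real (h^2) * (complex_of_real (x$a))^2 * dpart b (dpart b f) x"
  using sch_ld0[OF f] sch_ld1[OF f] sch_ld2[OF f] ab
  by (simp add: xhat_def phat_def power2_eq_square algebra_simps)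

definition Lab :: "real \<Rightarrow> 3 \<Rightarrow> 3 \<Rightarrow> fn \<Rightarrow> fn" where
  "Lab h a b g = (\<lambda>x. xhat a (phat h b g) x - xhat b (phat h a g) x)"

lemma lhat_eq: "lhat h 1 = Lab h 2 3" "lhat h 2 = Lab h 3 1" "lhat h 3 = Lab h 1 2"
  by (auto simp: lhat_def Lab_def fun_eq_iff)

lemma L_sq:
  assumes f: "f \<in> schwartz" and ab: "a \<noteq> b"
  shows "Lab h a b (Lab h a b f) x = - complex_of_real (h^2) *
    ((complex_of_real (x$a))^2 * dpart b (dpart b f) x + (complex_of_real (x$b))^2 * dpart a (dpart a f) x
     - complex_of_real (x$a) * complex_of_real (x$b) * (dpart a (dpart b f) x + dpart b (dpart a f) x)
     - complex_of_real (x$a) * dpart a f x - complex_of_real (x$b) * dpart b f x)"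
  using sch_ld0[OF f] sch_ld1[OF f] sch_ld2[OF f] ab
  by (simp add: Lab_def xhat_def phat_def power2_eq_square algebra_simps)

lemma mon_23: "op_tau_mon h t (mx 2 + mx 2 + mp 3 + mp 3) g = xhat 2 (xhat 2 (phat h 3 (phat h 3 g)))"
  by (simp add: op_tau_mon_def mx_def mp_def lookup_add lookup_single op1_00 op1_20S op1_02S)
lemma mon_32: "op_tau_mon h t (mx 3 + mx 3 + mp 2 + mp 2) g = phat h 2 (phat h 2 (xhat 3 (xhat 3 g)))"
  by (simp add: op_tau_mon_def mx_def mp_def lookup_add lookup_single op1_00 op1_20S op1_02S)
lemma mon_31: "op_tau_mon h t (mx 3 + mx 3 + mp 1 + mp 1) g = phat h 1 (phat h 1 (xhat 3 (xhat 3 g)))"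
  by (simp add: op_tau_mon_def mx_def mp_def lookup_add lookup_single op1_00 op1_20S op1_02S)
lemma mon_13: "op_tau_mon h t (mx 1 + mx 1 + mp 3 + mp 3) g = xhat 1 (xhat 1 (phat h 3 (phat h 3 g)))"
  by (simp add: op_tau_mon_def mx_def mp_def lookup_add lookup_single op1_00 op1_20S op1_02S)
lemma mon_12: "op_tau_mon h t (mx 1 + mx 1 + mp 2 + mp 2) g = xhat 1 (xhat 1 (phat h 2 (phat h 2 g)))"
  by (simp add: op_tau_mon_def mx_def mp_def lookup_add lookup_single op1_00 op1_20S op1_02S)
lemma mon_21: "op_tau_mon h t (mx 2 + mx 2 + mp 1 + mp 1) g = phat h 1 (phat h 1 (xhat 2 (xhat 2 g)))"
  by (simp add: op_tau_mon_def mx_def mp_def lookup_add lookup_single op1_00 op1_20S op1_02S)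
lemma monc_23: "op_tau_mon h t (mx 2 + mp 2 + mx 3 + mp 3) g = op_tau_1 h t 2 1 1 (op_tau_1 h t 3 1 1 g)"
  by (simp add: op_tau_mon_def mx_def mp_def lookup_add lookup_single op1_00)
lemma monc_31: "op_tau_mon h t (mx 3 + mp 3 + mx 1 + mp 1) g = op_tau_1 h t 1 1 1 (op_tau_1 h t 3 1 1 g)"
  by (simp add: op_tau_mon_def mx_def mp_def lookup_add lookup_single op1_00)
lemma monc_12: "op_tau_mon h t (mx 1 + mp 1 + mx 2 + mp 2) g = op_tau_1 h t 1 1 1 (op_tau_1 h t 2 1 1 g)"
  by (simp add: op_tau_mon_def mx_def mp_def lookup_add lookup_single op1_00)

lemma pointwise:
  assumes f: "f \<in> schwartz"
  shows "op_tau hb t l_sq f x = lhat_sq hb f x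
     + complex_of_real (1 - 2 * t) * (complex_of_real (2 * hb^2) * (complex_of_real (x $ 1) * dpart 1 f x + complex_of_real (x $ 2) * dpart 2 f x + complex_of_real (x $ 3) * dpart 3 f x))
     + complex_of_real (6 * (1 - t)^2 * hb^2) * f x"
proof -
  have c21: "dpart 2 (dpart 1 f) = dpart 1 (dpart 2 f)" by (rule clairaut[OF f])
  have c31: "dpart 3 (dpart 1 f) = dpart 1 (dpart 3 f)" by (rule clairaut[OF f])
  have c32: "dpart 3 (dpart 2 f) = dpart 2 (dpart 3 f)" by (rule clairaut[OF f])
  have U: "(UNIV :: 3 set) = {1,2,3}" by (auto simp: UNIV_3)
  have ne: "(1::3) \<noteq> 2" "(2::3) \<noteq> 1" "(1::3) \<noteq> 3" "(3::3) \<noteq> 1" "(2::3) \<noteq> 3" "(3::3) \<noteq> 2" by auto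
  show ?thesis
    apply (simp only: l_sq_expand op_tau_add op_tau_single mon_23 mon_32 mon_31 mon_13 mon_12 mon_21 monc_23 monc_31 monc_12)
    apply (simp only: mon_sq[OF f] mon_sq'[OF f] mon_cross[OF f] ne not_False_eq_True simp_thms
      lhat_sq_def lhat_eq L_sq[OF f])
    apply (simp only: c21 c31 c32 of_real_mult of_real_diff of_real_power of_real_numeral of_real_1 of_real_add of_real_neg_numeral of_real_minus)
    apply algebra
    done
qed

lemma int1: "((\<lambda>t::real. 1 - 2 * t) has_integral 0) {0..1}"
proof -
  have "((\<lambda>t::real. 1 - 2 * t) has_integral ((\<lambda>t. t - t^2) 1 - (\<lambda>t. t - t^2) 0)) {0..1}"
    by (rule fundamental_theorem_of_calculus)
       (auto intro!: derivative_eq_intros simp: has_real_derivative_iff_has_vector_derivative[symmetric])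
  then show ?thesis by simp
qed

lemma int2: "((\<lambda>t::real. 6 * (1 - t)^2 * c) has_integral 2 * c) {0..1}"
proof -
  have "((\<lambda>t::real. 6 * (1 - t)^2 * c) has_integral ((\<lambda>t. - 2 * (1 - t)^3 * c) 1 - (\<lambda>t. - 2 * (1 - t)^3 * c) 0)) {0..1}"
    by (rule fundamental_theorem_of_calculus)
       (auto intro!: derivative_eq_intros simp: has_real_derivative_iff_has_vector_derivative[symmetric] power2_eq_square algebra_simps)
  then show ?thesis by simp
qed

lemma int_all: "((\<lambda>t::real. L + complex_of_real (1 - 2 * t) * Q + complex_of_real (6 * (1 - t)^2 * c) * F)
   has_integral (L + complex_of_real (2 * c) * F)) {0..1}"
proof -
  have a: "((\<lambda>t::real. L) has_integral L) {0..1}" using has_integral_const_real[of L 0 1] by simp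
  have b: "((\<lambda>t::real. (1 - 2 * t) *\<^sub>R Q) has_integral 0 *\<^sub>R Q) {0..1}" by (rule has_integral_scaleR_left[OF int1])
  have c: "((\<lambda>t::real. (6 * (1 - t)^2 * c) *\<^sub>R F) has_integral (2 * c) *\<^sub>R F) {0..1}" by (rule has_integral_scaleR_left[OF int2])
  from has_integral_add[OF has_integral_add[OF a b] c] show ?thesis by (simp add: scaleR_conv_of_real)
qed

theorem mainTheorem1:
  fixes hbar :: real and f :: "real^3 \<Rightarrow> complex"
  assumes "hbar > 0" and "f \<in> schwartz"
  shows "op_BJ hbar l_sq f = (\<lambda>x. lhat_sq hbar f x + complex_of_real (2 * hbar ^ 2) * f x)"
proof
  fix x
  show "op_BJ hbar l_sq f x = lhat_sq hbar f x + complex_of_real (2 * hbar ^ 2) * f x"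
    unfolding op_BJ_def pointwise[OF assms(2)]
    by (rule integral_unique[OF int_all])
qed
end
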